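(* Let $0<\epsilon<1$, $0<\rho<1$ and integers $n\ge k\ge 1$. If $\mathbf{A}$ is a random $n\times k$ binary matrix with the Bernoulli$(n,k,\rho)$ distribution, then \[ \mathbb{E}_{\mathbf{A}}\big(p_c(\mathbf{A})\big)\;\ge\;\sum_{i=0}^{n}\binom{n}{i}\frac{2^n\,\epsilon^{2i}(1-\epsilon)^{2(n-i)}}{\sum_{j=0}^{k}\binom{k}{j}\big(1-(1-2\epsilon)(1-2\rho)^j\big)^i\big(1+(1-2\epsilon)(1-2\rho)^j\big)^{n-i}}. \]
   Context: All arithmetic on binary vectors and matrices is in $\mathrm{GF}(2)$. A binary linear code with generating matrix $\mathbf{A}\in\{0,1\}^{n\times k}$ encodes a message $X\in\{0,1\}^k$ as $\mathbf{A}X\in\{0,1\}^n$. Over the binary symmetric channel (BSC) with cross-over probability $\epsilon$, the channel output is $Y=\mathbf{A}X+N$, where $X$ is uniformly distributed on $\{0,1\}^k$ and $N\in\{0,1\}^n$ has i.i.d. Bernoulli$(\epsilon)$ entries (equal to $1$ with probability $\epsilon$), independent of $X$. The decoder, on receiving $Y=y$, outputs a random estimate $\hat X$ drawn from the posterior distribution $\mathbb{P}(X=\cdot\mid Y=y)$. Its probability of correct detection is $p_c(\mathbf{A})=\sum_{x,y}\mathbb{P}(X=x,Y=y)\,\mathbb{P}(X=x\mid Y=y)=\mathbb{E}_{X,Y}\big[\mathbb{P}(X\mid Y)\big]$, and the error probability is $p_e(\mathbf{A})=1-p_c(\mathbf{A})$. The Bernoulli$(n,k,\rho)$ distribution on the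 set $\mathcal{A}_{n\times k}$ of all binary $n\times k$ matrices is the one in which all $nk$ entries are i.i.d. Bernoulli$(\rho)$. *)

theory Defs
  imports "HOL-Analysis.Analysis"
begin

text \<open>GF(2) arithmetic: True = 1, False = 0, addition = xor, product = and.\<close>

definition bvecs :: "nat \<Rightarrow> (nat \<Rightarrow> bool) set" where
  "bvecs m = {v. \<forall>i. m \<le> i \<longrightarrow> \<not> v i}"

definition bmats :: "nat \<Rightarrow> nat \<Rightarrow> (nat \<Rightarrow> nat \<Rightarrow> bool) set" where
  "bmats n k = {A. \<forall>i j. (n \<le> i \<or> k \<le> j) \<longrightarrow> \<not> A i j}"

definition encode :: "nat \<Rightarrow> nat \<Rightarrow> (nat \<Rightarrow> nat \<Rightarrow> bool) \<Rightarrow> (nat \<Rightarrow> bool) \<Rightarrow> (nat \<Rightarrow> bool)" where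
  "encode n k A x = (\<lambda>i. i < n \<and> odd (card {j\<in>{0..<k}. A i j \<and> x j}))"

definition hdist :: "nat \<Rightarrow> (nat \<Rightarrow> bool) \<Rightarrow> (nat \<Rightarrow> bool) \<Rightarrow> nat" where
  "hdist n u v = card {i\<in>{0..<n}. u i \<noteq> v i}"

text \<open>Joint probability P(X = x, Y = y) for Y = A X + N over BSC(eps), X uniform.\<close>
definition joint_prob :: "nat \<Rightarrow> nat \<Rightarrow> real \<Rightarrow> (nat \<Rightarrow> nat \<Rightarrow> bool) \<Rightarrow> (nat \<Rightarrow> bool) \<Rightarrow> (nat \<Rightarrow> bool) \<Rightarrow> real" where
  "joint_prob n k eps A x y =
     (1 / 2 ^ k) * eps ^ hdist n (encode n k A x) y * (1 - eps) ^ (n - hdist n (encode n k A x) y)"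

definition out_prob :: "nat \<Rightarrow> nat \<Rightarrow> real \<Rightarrow> (nat \<Rightarrow> nat \<Rightarrow> bool) \<Rightarrow> (nat \<Rightarrow> bool) \<Rightarrow> real" where
  "out_prob n k eps A y = (\<Sum>x\<in>bvecs k. joint_prob n k eps A x y)"

definition posterior :: "nat \<Rightarrow> nat \<Rightarrow> real \<Rightarrow> (nat \<Rightarrow> nat \<Rightarrow> bool) \<Rightarrow> (nat \<Rightarrow> bool) \<Rightarrow> (nat \<Rightarrow> bool) \<Rightarrow> real" where
  "posterior n k eps A x y = joint_prob n k eps A x y / out_prob n k eps A y"

text \<open>Probability of correct detection of the posterior-sampling decoder.\<close>
definition p_c :: "nat \<Rightarrow> nat \<Rightarrow> real \<Rightarrow> (nat \<Rightarrow> nat \<Rightarrow> bool) \<Rightarrow> real" where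
  "p_c n k eps A = (\<Sum>x\<in>bvecs k. \<Sum>y\<in>bvecs n. joint_prob n k eps A x y * posterior n k eps A x y)"

definition bern_mat_prob :: "nat \<Rightarrow> nat \<Rightarrow> real \<Rightarrow> (nat \<Rightarrow> nat \<Rightarrow> bool) \<Rightarrow> real" where
  "bern_mat_prob n k rho A =
     rho ^ card {(i,j). i < n \<and> j < k \<and> A i j} * (1 - rho) ^ (n * k - card {(i,j). i < n \<and> j < k \<and> A i j})"

end

theory Submission imports Defs begin

definition GS :: "nat \<Rightarrow> 'a set \<Rightarrow> 'a \<Rightarrow> (nat \<Rightarrow> 'a) set" where
  "GS m D d0 = {f. (\<forall>i<m. f i \<in> D) \<and> (\<forall>i. m \<le> i \<longrightarrow> f i = d0)}"

lemma GS_0: "GS 0 D d0 = {\<lambda>_. d0}"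
  unfolding GS_def by auto

lemma GS_Suc: "GS (Suc m) D d0 = (\<lambda>(f,d). f(m:=d)) ` (GS m D d0 \<times> D)"
proof
  show "GS (Suc m) D d0 \<subseteq> (\<lambda>(f,d). f(m:=d)) ` (GS m D d0 \<times> D)"
  proof
    fix g assume g: "g \<in> GS (Suc m) D d0"
    have "g = (\<lambda>(f,d). f(m:=d)) (g(m:=d0), g m)" by auto
    moreover have "(g(m:=d0), g m) \<in> GS m D d0 \<times> D"
      using g unfolding GS_def by (auto simp: less_Suc_eq)
    ultimately show "g \<in> (\<lambda>(f,d). f(m:=d)) ` (GS m D d0 \<times> D)" by blast
  qed
  show "(\<lambda>(f,d). f(m:=d)) ` (GS m D d0 \<times> D) \<subseteq> GS (Suc m) D d0"
    unfolding GS_def by (auto simp: less_Suc_eq)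
qed

lemma GS_inj: "inj_on (\<lambda>(f,d). f(m:=d)) (GS m D d0 \<times> D)"
proof (rule inj_onI, clarify)
  fix f d f' d' assume a: "f \<in> GS m D d0" "d \<in> D" "f' \<in> GS m D d0" "d' \<in> D" "f(m:=d) = f'(m:=d')"
  then have "d = d'" by (metis fun_upd_same)
  moreover have "f = f'"
  proof
    fix i show "f i = f' i"
    proof (cases "i = m")
      case True then show ?thesis using a unfolding GS_def by auto
    next
      case False then show ?thesis using a(5) by (metis fun_upd_other)
    qed
  qed
  ultimately show "f = f' \<and> d = d'" by simp
qed

lemma GS_finite: "finite D \<Longrightarrow> finite (GS m D d0)"
  by (induction m) (auto simp: GS_0 GS_Suc)

lemma GS_sum_prod:
  fixes F :: "nat \<Rightarrow> 'a \<Rightarrow> real"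
  assumes "finite D"
  shows "(\<Sum>f\<in>GS m D d0. \<Prod>i<m. F i (f i)) = (\<Prod>i<m. \<Sum>d\<in>D. F i (d))"
proof (induction m)
  case 0 then show ?case by (simp add: GS_0)
next
  case (Suc m)
  have "(\<Sum>f\<in>GS (Suc m) D d0. \<Prod>i<Suc m. F i (f i))
      = (\<Sum>x\<in>GS m D d0 \<times> D. (\<lambda>g. \<Prod>i<Suc m. F i (g i)) ((\<lambda>(f,d). f(m:=d)) x))"
    unfolding GS_Suc by (rule sum.reindex[OF GS_inj, unfolded comp_def])
  also have "\<dots> = (\<Sum>x\<in>GS m D d0 \<times> D. (\<Prod>i<m. F i (fst x i)) * F m (snd x))"
  proof (rule sum.cong[OF refl])
    fix x :: "(nat \<Rightarrow> 'a) \<times> 'a"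
    obtain f d where x: "x = (f,d)" by (cases x)
    have "(\<Prod>i<m. F i ((f(m:=d)) i)) = (\<Prod>i<m. F i (f i))"
      by (rule prod.cong) auto
    then show "(\<lambda>g. \<Prod>i<Suc m. F i (g i)) ((\<lambda>(f,d). f(m:=d)) x) = (\<Prod>i<m. F i (fst x i)) * F m (snd x)"
      by (simp add: x)
  qed
  also have "\<dots> = (\<Sum>f\<in>GS m D d0. \<Sum>d\<in>D. (\<Prod>i<m. F i (f i)) * F m d)"
    by (simp add: sum.cartesian_product case_prod_beta)
  also have "\<dots> = (\<Sum>f\<in>GS m D d0. \<Prod>i<m. F i (f i)) * (\<Sum>d\<in>D. F m d)"
    by (simp add: sum_product)
  finally show ?case using Suc by simp
qed

lemma prod_if_card:
  fixes a b :: real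
  assumes "finite S"
  shows "(\<Prod>x\<in>S. if P x then a else b) = a ^ card {x\<in>S. P x} * b ^ (card S - card {x\<in>S. P x})"
proof -
  have "card (S \<inter> - {x. P x}) = card S - card {x\<in>S. P x}"
  proof -
    have "S \<inter> - {x. P x} = S - {x\<in>S. P x}" by auto
    then show ?thesis using assms by (simp add: card_Diff_subset)
  qed
  moreover have "S \<inter> {x. P x} = {x\<in>S. P x}" by auto
  ultimately show ?thesis using prod.If_cases[OF assms, of P "\<lambda>_. a" "\<lambda>_. b"] by simp
qed

lemma bvecs_GS: "bvecs m = GS m UNIV False"
  unfolding bvecs_def GS_def by auto

lemma bmats_GS: "bmats n k = GS n (bvecs k) (\<lambda>_. False)"
  unfolding bmats_def GS_def bvecs_def by (auto simp: fun_eq_iff) (meson not_le)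

lemma finite_bvecs: "finite (bvecs m)"
  unfolding bvecs_GS by (rule GS_finite) simp

lemma finite_bmats: "finite (bmats n k)"
  unfolding bmats_GS by (rule GS_finite[OF finite_bvecs])

lemma bvecs_sum_prod:
  fixes F :: "nat \<Rightarrow> bool \<Rightarrow> real"
  shows "(\<Sum>v\<in>bvecs m. \<Prod>i<m. F i (v i)) = (\<Prod>i<m. F i True + F i False)"
  unfolding bvecs_GS by (subst GS_sum_prod) (auto simp: UNIV_bool add.commute)

lemma card_bvecs: "card (bvecs m) = 2 ^ m"
proof -
  have "real (card (bvecs m)) = (\<Sum>v\<in>bvecs m. \<Prod>i<m. (\<lambda>_ _. 1::real) i (v i))" by simp
  also have "\<dots> = 2 ^ m" by (subst bvecs_sum_prod) simp
  finally show ?thesis by (metis of_nat_eq_of_nat_power_cancel_iff of_nat_numeral)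
qed

lemma count_bvecs:
  fixes f :: "nat \<Rightarrow> real"
  shows "(\<Sum>v\<in>bvecs m. f (card {l. l < m \<and> v l})) = (\<Sum>j=0..m. real (m choose j) * f j)"
proof -
  have bij: "bij_betw (\<lambda>v. {l. l < m \<and> v l}) (bvecs m) (Pow {..<m})"
  proof (rule bij_betw_byWitness[where f' = "\<lambda>S l. l \<in> S"])
    show "\<forall>a\<in>bvecs m. (\<lambda>l. l \<in> {l. l < m \<and> a l}) = a" unfolding bvecs_def by (auto simp: fun_eq_iff) (meson not_le)
    show "\<forall>a'\<in>Pow {..<m}. {l. l < m \<and> l \<in> a'} = a'" by auto
    show "(\<lambda>v. {l. l < m \<and> v l}) ` bvecs m \<subseteq> Pow {..<m}" by auto
    show "(\<lambda>S l. l \<in> S) ` Pow {..<m} \<subseteq> bvecs m" unfolding bvecs_def by auto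
  qed
  have "(\<Sum>v\<in>bvecs m. f (card {l. l < m \<and> v l})) = (\<Sum>S\<in>Pow {..<m}. f (card S))"
    using sum.reindex_bij_betw[OF bij, of "\<lambda>S. f (card S)"] by simp
  also have "\<dots> = (\<Sum>j\<in>{0..m}. \<Sum>S\<in>{S. S \<in> Pow {..<m} \<and> card S = j}. f (card S))"
    by (rule sum.group[symmetric]) (auto intro: card_mono[of "{..<m}", simplified])
  also have "\<dots> = (\<Sum>j\<in>{0..m}. real (m choose j) * f j)"
  proof (rule sum.cong, simp)
    fix j
    have "{S. S \<in> Pow {..<m} \<and> card S = j} = {B. B \<subseteq> {..<m} \<and> card B = j}" by auto
    then have "card {S. S \<in> Pow {..<m} \<and> card S = j} = m choose j" using n_subsets[of "{..<m}" j] by simp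
    moreover have "(\<Sum>S\<in>{S. S \<in> Pow {..<m} \<and> card S = j}. f (card S)) = (\<Sum>S\<in>{S. S \<in> Pow {..<m} \<and> card S = j}. f j)"
      by (rule sum.cong) auto
    ultimately show "(\<Sum>S\<in>{S. S \<in> Pow {..<m} \<and> card S = j}. f (card S)) = real (m choose j) * f j" by simp
  qed
  finally show ?thesis .
qed


definition sg :: "bool \<Rightarrow> real" where "sg b = (if b then -1 else 1)"
definition xr :: "(nat \<Rightarrow> bool) \<Rightarrow> (nat \<Rightarrow> bool) \<Rightarrow> (nat \<Rightarrow> bool)" where "xr u v = (\<lambda>i. u i \<noteq> v i)"
definition Wf :: "nat \<Rightarrow> real \<Rightarrow> (nat \<Rightarrow> bool) \<Rightarrow> (nat \<Rightarrow> bool) \<Rightarrow> real" where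
  "Wf n e y c = (\<Prod>l<n. if c l = y l then 1 - e else e)"
definition Bf :: "nat \<Rightarrow> nat \<Rightarrow> real \<Rightarrow> (nat \<Rightarrow> nat \<Rightarrow> bool) \<Rightarrow> (nat \<Rightarrow> bool) \<Rightarrow> real" where
  "Bf n k e A y = (\<Sum>z\<in>bvecs k. Wf n e y (encode n k A z))"

lemma joint_W: "joint_prob n k e A x y = Wf n e y (encode n k A x) / 2 ^ k"
proof -
  have "Wf n e y (encode n k A x) = (\<Prod>l<n. if encode n k A x l \<noteq> y l then e else 1 - e)"
    unfolding Wf_def by (rule prod.cong) auto
  also have "\<dots> = e ^ hdist n (encode n k A x) y * (1 - e) ^ (n - hdist n (encode n k A x) y)"
    by (subst prod_if_card) (auto simp: hdist_def atLeast0LessThan)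
  finally show ?thesis unfolding joint_prob_def by simp
qed

lemma sg_odd: "sg (odd c) = (-1) ^ c"
  unfolding sg_def by simp

lemma encode_sg: "l < n \<Longrightarrow> sg (encode n k A x l) = (\<Prod>j<k. sg (A l j \<and> x j))"
proof -
  assume l: "l < n"
  have "(\<Prod>j<k. sg (A l j \<and> x j)) = (\<Prod>j<k. if A l j \<and> x j then -1 else 1)"
    unfolding sg_def by simp
  also have "\<dots> = (-1) ^ card {j\<in>{..<k}. A l j \<and> x j}"
    by (subst prod_if_card) auto
  finally show ?thesis using l unfolding encode_def by (simp add: sg_odd atLeast0LessThan)
qed

lemma sg_xor: "sg (a \<noteq> b) = sg a * sg b"
  unfolding sg_def by auto

lemma sg_inj: "sg a = sg b \<Longrightarrow> a = b"
  unfolding sg_def by (auto split: if_splits)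

lemma encode_xr: "encode n k A (xr x z) = xr (encode n k A x) (encode n k A z)"
proof
  fix l show "encode n k A (xr x z) l = xr (encode n k A x) (encode n k A z) l"
  proof (cases "l < n")
    case True
    have "sg (encode n k A (xr x z) l) = (\<Prod>j<k. sg (A l j \<and> x j) * sg (A l j \<and> z j))"
      unfolding encode_sg[OF True] xr_def by (rule prod.cong) (auto simp: sg_def)
    also have "\<dots> = sg (encode n k A x l) * sg (encode n k A z l)"
      by (simp add: encode_sg[OF True] prod.distrib)
    also have "\<dots> = sg (xr (encode n k A x) (encode n k A z) l)"
      by (simp only: xr_def sg_xor)
    finally show ?thesis by (rule sg_inj)
  next
    case False then show ?thesis by (simp add: encode_def xr_def)
  qed
qed

lemma W_shift1: "Wf n e (xr y v) (xr v c) = Wf n e y c"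
  unfolding Wf_def xr_def by (rule prod.cong) auto

lemma W_shift0: "Wf n e (xr y v) v = Wf n e y (\<lambda>_. False)"
  unfolding Wf_def xr_def by (rule prod.cong) auto

lemma W_shift0': "Wf n e (xr y v) (\<lambda>_. False) = Wf n e y v"
  unfolding Wf_def xr_def by (rule prod.cong) auto

lemma W_pos: "0 < e \<Longrightarrow> e < 1 \<Longrightarrow> 0 < Wf n e y c"
  unfolding Wf_def by (rule prod_pos) auto

lemma xr_bvecs: "u \<in> bvecs m \<Longrightarrow> v \<in> bvecs m \<Longrightarrow> xr u v \<in> bvecs m"
  unfolding bvecs_def xr_def by auto

lemma xr_xr: "xr (xr u v) v = u"
  unfolding xr_def by auto

lemma xr_xr2: "xr v (xr v u) = u"
  unfolding xr_def by auto

lemma encode_bvecs: "encode n k A x \<in> bvecs n"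
  unfolding bvecs_def encode_def by auto

lemma zero_bvecs: "(\<lambda>_. False) \<in> bvecs m"
  unfolding bvecs_def by auto

lemma B_pos: "0 < e \<Longrightarrow> e < 1 \<Longrightarrow> 0 < Bf n k e A y"
  unfolding Bf_def
  by (rule sum_pos[OF finite_bvecs]) (auto intro: W_pos zero_bvecs)

lemma B_shift:
  assumes x: "x \<in> bvecs k"
  shows "Bf n k e A (xr y (encode n k A x)) = Bf n k e A y"
proof -
  let ?v = "encode n k A x"
  have "Bf n k e A (xr y ?v) = (\<Sum>z\<in>bvecs k. Wf n e (xr y ?v) (encode n k A (xr x z)))"
    unfolding Bf_def
    by (rule sum.reindex_bij_witness[where i = "xr x" and j = "xr x"])
       (auto simp: xr_bvecs[OF x] xr_xr2)
  also have "\<dots> = Bf n k e A y"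
    unfolding Bf_def encode_xr W_shift1 ..
  finally show ?thesis .
qed

lemma pc_formula:
  assumes e: "0 < e" "e < 1"
  shows "p_c n k e A = (\<Sum>y\<in>bvecs n. Wf n e y (\<lambda>_. False) ^ 2 / Bf n k e A y)"
proof -
  have out: "out_prob n k e A y = Bf n k e A y / 2 ^ k" for y
    unfolding out_prob_def Bf_def joint_W by (simp add: sum_divide_distrib)
  have trm: "joint_prob n k e A x y * posterior n k e A x y = Wf n e y (encode n k A x) ^ 2 / (2 ^ k * Bf n k e A y)" for x y
    unfolding posterior_def out joint_W using B_pos[OF e, of n k A y]
    by (simp add: field_simps power2_eq_square)
  have inner: "(\<Sum>y\<in>bvecs n. Wf n e y (encode n k A x) ^ 2 / (2 ^ k * Bf n k e A y))
      = (\<Sum>y\<in>bvecs n. Wf n e y (\<lambda>_. False) ^ 2 / (2 ^ k * Bf n k e A y))" if x: "x \<in> bvecs k" for x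
    by (rule sum.reindex_bij_witness[where i = "\<lambda>y. xr y (encode n k A x)" and j = "\<lambda>y. xr y (encode n k A x)"])
       (auto simp: xr_bvecs encode_bvecs xr_xr W_shift0' B_shift[OF x])
  have "p_c n k e A = (\<Sum>x\<in>bvecs k. \<Sum>y\<in>bvecs n. Wf n e y (\<lambda>_. False) ^ 2 / (2 ^ k * Bf n k e A y))"
    unfolding p_c_def trm by (rule sum.cong[OF refl]) (rule inner)
  also have "\<dots> = (\<Sum>y\<in>bvecs n. Wf n e y (\<lambda>_. False) ^ 2 / Bf n k e A y)"
    by (simp add: card_bvecs sum_distrib_left)
  finally show ?thesis .
qed


definition prow :: "nat \<Rightarrow> real \<Rightarrow> (nat \<Rightarrow> bool) \<Rightarrow> real" where
  "prow k p r = (\<Prod>j<k. if r j then p else 1 - p)"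
definition rowbit :: "nat \<Rightarrow> (nat \<Rightarrow> bool) \<Rightarrow> (nat \<Rightarrow> bool) \<Rightarrow> bool" where
  "rowbit k r z = odd (card {j\<in>{0..<k}. r j \<and> z j})"

lemma encode_rowbit: "l < n \<Longrightarrow> encode n k A z l = rowbit k (A l) z"
  unfolding encode_def rowbit_def by simp

lemma rowbit_sg: "sg (rowbit k r z) = (\<Prod>j<k. sg (r j \<and> z j))"
proof -
  have "(\<Prod>j<k. sg (r j \<and> z j)) = (\<Prod>j<k. if r j \<and> z j then -1 else 1)"
    unfolding sg_def by simp
  also have "\<dots> = (-1) ^ card {j\<in>{..<k}. r j \<and> z j}"
    by (subst prod_if_card) auto
  finally show ?thesis unfolding rowbit_def by (simp add: sg_odd atLeast0LessThan)
qed

lemma bern_prod: "bern_mat_prob n k p A = (\<Prod>i<n. prow k p (A i))"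
proof -
  have "(\<Prod>i<n. prow k p (A i)) = (\<Prod>x\<in>{..<n} \<times> {..<k}. if (case x of (i,j) \<Rightarrow> A i j) then p else 1 - p)"
    unfolding prow_def prod.cartesian_product by (rule prod.cong) auto
  also have "\<dots> = p ^ card {x\<in>{..<n} \<times> {..<k}. case x of (i,j) \<Rightarrow> A i j} *
      (1 - p) ^ (n * k - card {x\<in>{..<n} \<times> {..<k}. case x of (i,j) \<Rightarrow> A i j})"
    by (subst prod_if_card) (auto simp: card_cartesian_product)
  also have "{x\<in>{..<n} \<times> {..<k}. case x of (i,j) \<Rightarrow> A i j} = {(i,j). i < n \<and> j < k \<and> A i j}"
    by auto
  finally show ?thesis unfolding bern_mat_prob_def by simp
qed

lemma prow_sum: "(\<Sum>r\<in>bvecs k. prow k p r) = 1"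
  unfolding prow_def by (subst bvecs_sum_prod) simp

lemma prow_nonneg: "0 \<le> p \<Longrightarrow> p \<le> 1 \<Longrightarrow> 0 \<le> prow k p r"
  unfolding prow_def by (rule prod_nonneg) auto

lemma bern_sum: "(\<Sum>A\<in>bmats n k. bern_mat_prob n k p A) = 1"
  unfolding bern_prod bmats_GS by (subst GS_sum_prod[OF finite_bvecs]) (simp add: prow_sum)

lemma bern_nonneg: "0 \<le> p \<Longrightarrow> p \<le> 1 \<Longrightarrow> 0 \<le> bern_mat_prob n k p A"
  unfolding bern_prod by (rule prod_nonneg) (auto intro: prow_nonneg)

lemma jensen_inv:
  fixes q b :: "'a \<Rightarrow> real"
  assumes S: "finite S" and q: "\<And>a. a \<in> S \<Longrightarrow> 0 \<le> q a" and s1: "(\<Sum>a\<in>S. q a) = 1"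
    and b: "\<And>a. a \<in> S \<Longrightarrow> 0 < b a"
  shows "1 / (\<Sum>a\<in>S. q a * b a) \<le> (\<Sum>a\<in>S. q a / b a)"
proof -
  define m where "m = (\<Sum>a\<in>S. q a * b a)"
  have m: "0 < m"
  proof -
    obtain a where a: "a \<in> S" "q a \<noteq> 0" using s1 by (metis sum.neutral zero_neq_one)
    have "0 < q a * b a" using a q b by (simp add: order_le_neq_trans)
    also have "q a * b a \<le> m" unfolding m_def
      by (rule member_le_sum[OF a(1)]) (use q b S in \<open>auto intro: mult_nonneg_nonneg less_imp_le\<close>)
    finally show ?thesis .
  qed
  have pt: "q a * (2 / m - b a / m ^ 2) \<le> q a / b a" if a: "a \<in> S" for a
  proof -
    have "2 / m - b a / m ^ 2 \<le> 1 / b a"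
    proof -
      have "(m - b a) ^ 2 \<ge> 0" by simp
      then have "b a * (2 * m - b a) \<le> m ^ 2" by (simp add: power2_eq_square algebra_simps)
      then show ?thesis using m b[OF a] by (simp add: field_simps power2_eq_square)
    qed
    then show ?thesis using q[OF a] by (metis mult_left_mono times_divide_eq_right mult_1_right)
  qed
  have "(\<Sum>a\<in>S. q a * (2 / m - b a / m ^ 2)) = (\<Sum>a\<in>S. (2 / m) * q a - (1 / m ^ 2) * (q a * b a))"
    by (rule sum.cong) (auto simp: field_simps)
  also have "\<dots> = 2 / m * (\<Sum>a\<in>S. q a) - 1 / m ^ 2 * (\<Sum>a\<in>S. q a * b a)"
    by (simp add: sum_subtractf sum_distrib_left)
  also have "\<dots> = 1 / m" using m s1 unfolding m_def[symmetric] by (simp add: field_simps power2_eq_square)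
  finally have "1 / m \<le> (\<Sum>a\<in>S. q a / b a)" using sum_mono[of S "\<lambda>a. q a * (2 / m - b a / m ^ 2)" "\<lambda>a. q a / b a", OF pt] by simp
  then show ?thesis unfolding m_def .
qed

lemma row_sum:
  "(\<Sum>r\<in>bvecs k. prow k p r * (if rowbit k r z = b then 1 - e else e))
     = (1 + sg b * ((1 - 2 * e) * (1 - 2 * p) ^ card {j. j < k \<and> z j})) / 2"
proof -
  have ifeq: "(if rowbit k r z = b then 1 - e else e) = (1 + (1 - 2 * e) * sg b * sg (rowbit k r z)) / 2" for r
    unfolding sg_def by auto
  have s2: "(\<Sum>r\<in>bvecs k. prow k p r * sg (rowbit k r z)) = (1 - 2 * p) ^ card {j. j < k \<and> z j}"
  proof -
    have "(\<Sum>r\<in>bvecs k. prow k p r * sg (rowbit k r z))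
        = (\<Sum>r\<in>bvecs k. \<Prod>j<k. (\<lambda>j b. (if b then p else 1 - p) * sg (b \<and> z j)) j (r j))"
      unfolding prow_def rowbit_sg prod.distrib by simp
    also have "\<dots> = (\<Prod>j<k. if z j then 1 - 2 * p else 1)"
      by (subst bvecs_sum_prod) (rule prod.cong, auto simp: sg_def)
    also have "\<dots> = (1 - 2 * p) ^ card {j. j < k \<and> z j}"
      by (subst prod_if_card) auto
    finally show ?thesis .
  qed
  have "(\<Sum>r\<in>bvecs k. prow k p r * (if rowbit k r z = b then 1 - e else e))
      = (\<Sum>r\<in>bvecs k. prow k p r) / 2 + (1 - 2 * e) * sg b / 2 * (\<Sum>r\<in>bvecs k. prow k p r * sg (rowbit k r z))"
  proof -
    have "prow k p r * (if rowbit k r z = b then 1 - e else e) = prow k p r / 2 + (1 - 2 * e) * sg b / 2 * (prow k p r * sg (rowbit k r z))" for r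
      unfolding ifeq by (simp add: field_simps)
    then show ?thesis by (simp add: sum.distrib sum_distrib_left sum_divide_distrib)
  qed
  then show ?thesis unfolding prow_sum s2 by (simp add: field_simps)
qed


lemma mat_sum:
  "(\<Sum>A\<in>bmats n k. bern_mat_prob n k p A * Wf n e y (encode n k A z))
    = ((1 - (1 - 2 * e) * (1 - 2 * p) ^ card {j. j < k \<and> z j}) / 2) ^ card {l. l < n \<and> y l} *
      ((1 + (1 - 2 * e) * (1 - 2 * p) ^ card {j. j < k \<and> z j}) / 2) ^ (n - card {l. l < n \<and> y l})"
proof -
  define c where "c = (1 - 2 * e) * (1 - 2 * p) ^ card {j. j < k \<and> z j}"
  have "(\<Sum>A\<in>bmats n k. bern_mat_prob n k p A * Wf n e y (encode n k A z))
     = (\<Sum>A\<in>bmats n k. \<Prod>l<n. (\<lambda>l r. prow k p r * (if rowbit k r z = y l then 1 - e else e)) l (A l))"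
    unfolding bern_prod Wf_def prod.distrib[symmetric]
    by (rule sum.cong[OF refl], rule prod.cong[OF refl]) (simp add: encode_rowbit)
  also have "\<dots> = (\<Prod>l<n. (1 + sg (y l) * c) / 2)"
    unfolding bmats_GS by (subst GS_sum_prod[OF finite_bvecs]) (simp add: row_sum c_def)
  also have "\<dots> = (\<Prod>l<n. if y l then (1 - c) / 2 else (1 + c) / 2)"
    by (rule prod.cong) (auto simp: sg_def)
  also have "\<dots> = ((1 - c) / 2) ^ card {l. l < n \<and> y l} * ((1 + c) / 2) ^ (n - card {l. l < n \<and> y l})"
    by (subst prod_if_card) auto
  finally show ?thesis unfolding c_def .
qed

lemma W0: "Wf n e y (\<lambda>_. False) = e ^ card {l. l < n \<and> y l} * (1 - e) ^ (n - card {l. l < n \<and> y l})"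
proof -
  have "Wf n e y (\<lambda>_. False) = (\<Prod>l<n. if y l then e else 1 - e)"
    unfolding Wf_def by (rule prod.cong) auto
  also have "\<dots> = e ^ card {l. l < n \<and> y l} * (1 - e) ^ (n - card {l. l < n \<and> y l})"
    by (subst prod_if_card) auto
  finally show ?thesis .
qed

theorem theorem1:
  fixes eps rho :: real and n k :: nat
  assumes "0 < eps" "eps < 1" "0 < rho" "rho < 1" "1 \<le> k" "k \<le> n"
  shows "(\<Sum>A\<in>bmats n k. bern_mat_prob n k rho A * p_c n k eps A)
    \<ge> (\<Sum>i=0..n. real (n choose i) *
          (2 ^ n * eps ^ (2 * i) * (1 - eps) ^ (2 * (n - i))) /
          (\<Sum>j=0..k. real (k choose j) *
              (1 - (1 - 2 * eps) * (1 - 2 * rho) ^ j) ^ i *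
              (1 + (1 - 2 * eps) * (1 - 2 * rho) ^ j) ^ (n - i)))"
proof -
  let ?q = "bern_mat_prob n k rho"
  let ?W0 = "\<lambda>y. Wf n eps y (\<lambda>_. False)"
  define g where "g i j = ((1 - (1 - 2 * eps) * (1 - 2 * rho) ^ j) / 2) ^ i *
      ((1 + (1 - 2 * eps) * (1 - 2 * rho) ^ j) / 2) ^ (n - i)" for i j
  define h where "h i = (eps ^ i * (1 - eps) ^ (n - i)) ^ 2 / (\<Sum>j=0..k. real (k choose j) * g i j)" for i
  have qn: "\<And>A. 0 \<le> ?q A" using assms by (intro bern_nonneg) auto
  have "(\<Sum>A\<in>bmats n k. ?q A * p_c n k eps A)
      = (\<Sum>A\<in>bmats n k. \<Sum>y\<in>bvecs n. ?W0 y ^ 2 * (?q A / Bf n k eps A y))"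
    unfolding pc_formula[OF assms(1,2)] by (simp add: sum_distrib_left algebra_simps)
  also have "\<dots> = (\<Sum>y\<in>bvecs n. ?W0 y ^ 2 * (\<Sum>A\<in>bmats n k. ?q A / Bf n k eps A y))"
    by (subst sum.swap) (simp add: sum_distrib_left)
  also have "\<dots> \<ge> (\<Sum>y\<in>bvecs n. ?W0 y ^ 2 * (1 / (\<Sum>A\<in>bmats n k. ?q A * Bf n k eps A y)))"
    by (rule sum_mono, rule mult_left_mono, rule jensen_inv[OF finite_bmats qn bern_sum])
       (auto intro: B_pos assms)
  finally have step: "(\<Sum>y\<in>bvecs n. ?W0 y ^ 2 * (1 / (\<Sum>A\<in>bmats n k. ?q A * Bf n k eps A y)))
      \<le> (\<Sum>A\<in>bmats n k. ?q A * p_c n k eps A)" .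
  have M: "(\<Sum>A\<in>bmats n k. ?q A * Bf n k eps A y) = (\<Sum>j=0..k. real (k choose j) * g (card {l. l < n \<and> y l}) j)" for y
  proof -
    have "(\<Sum>A\<in>bmats n k. ?q A * Bf n k eps A y) = (\<Sum>z\<in>bvecs k. \<Sum>A\<in>bmats n k. ?q A * Wf n eps y (encode n k A z))"
      unfolding Bf_def by (subst sum.swap) (simp add: sum_distrib_left)
    also have "\<dots> = (\<Sum>z\<in>bvecs k. g (card {l. l < n \<and> y l}) (card {j. j < k \<and> z j}))"
      unfolding mat_sum g_def ..
    also have "\<dots> = (\<Sum>j=0..k. real (k choose j) * g (card {l. l < n \<and> y l}) j)"
      by (rule count_bvecs)
    finally show ?thesis .
  qed
  have "(\<Sum>y\<in>bvecs n. ?W0 y ^ 2 * (1 / (\<Sum>A\<in>bmats n k. ?q A * Bf n k eps A y)))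
      = (\<Sum>y\<in>bvecs n. h (card {l. l < n \<and> y l}))"
    unfolding M W0 h_def by simp
  also have "\<dots> = (\<Sum>i=0..n. real (n choose i) * h i)"
    by (rule count_bvecs)
  also have "\<dots> = (\<Sum>i=0..n. real (n choose i) *
          (2 ^ n * eps ^ (2 * i) * (1 - eps) ^ (2 * (n - i))) /
          (\<Sum>j=0..k. real (k choose j) *
              (1 - (1 - 2 * eps) * (1 - 2 * rho) ^ j) ^ i *
              (1 + (1 - 2 * eps) * (1 - 2 * rho) ^ j) ^ (n - i)))"
  proof (rule sum.cong[OF refl])
    fix i assume i: "i \<in> {0..n}"
    have gi: "g i j = (1 - (1 - 2 * eps) * (1 - 2 * rho) ^ j) ^ i *
              (1 + (1 - 2 * eps) * (1 - 2 * rho) ^ j) ^ (n - i) / 2 ^ n" for j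
    proof -
      have "(2::real) ^ n = 2 ^ i * 2 ^ (n - i)" using i by (simp add: power_add[symmetric])
      then show ?thesis unfolding g_def by (simp add: power_divide)
    qed
    have "(\<Sum>j=0..k. real (k choose j) * g i j) = (\<Sum>j=0..k. real (k choose j) *
              (1 - (1 - 2 * eps) * (1 - 2 * rho) ^ j) ^ i *
              (1 + (1 - 2 * eps) * (1 - 2 * rho) ^ j) ^ (n - i)) / 2 ^ n"
      unfolding gi sum_divide_distrib by (simp add: algebra_simps)
    then show "real (n choose i) * h i = real (n choose i) *
          (2 ^ n * eps ^ (2 * i) * (1 - eps) ^ (2 * (n - i))) /
          (\<Sum>j=0..k. real (k choose j) *
              (1 - (1 - 2 * eps) * (1 - 2 * rho) ^ j) ^ i *
              (1 + (1 - 2 * eps) * (1 - 2 * rho) ^ j) ^ (n - i))"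
      unfolding h_def by (simp add: power_mult_distrib power_mult[symmetric] mult.commute)
  qed
  finally show ?thesis using step by simp
qed

end
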